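(* Let $p,q\ge0$ be integers and $\alpha=(\alpha_1,\dots,\alpha_p)$, $\beta=(\beta_1,\dots,\beta_q)$ real parameters, none of the $\beta_j$ equal to $0$, at least one of them a negative integer, and let $N$ be the largest absolute value of the negative integers among the $\alpha_i,\beta_j$. For $0\le n\le N$ put $c_n=\frac{(\alpha_1)_n\cdots(\alpha_p)_n}{(\beta_1)_n\cdots(\beta_q)_n\,n!}$ (assumed well defined, i.e. all denominators nonzero for $n\le N$), and fix complex numbers $s_n$ with $s_n^2=c_n$ (so $|s_n|^2=|c_n|$). Work in the $(N+1)$-dimensional Hilbert space with orthonormal basis $|0\rangle,\dots,|N\rangle$ and, for $w\in\mathbb{C}\setminus\{0\}$, define the truncated hypergeometric coherent state $|w;\alpha,\beta\rangle=\mathcal N(|w|)^{-1/2}\sum_{n=0}^{N}s_n w^n|n\rangle$, where $\mathcal N(|w|)=\sum_{n=0}^N|c_n|\,|w|^{2n}$ (which equals the truncated hypergeometric sum ${}_pF_q(\alpha,\beta;(-1)^\varsigma|w|^2)_N$, $\varsigma$ the number of negative parameters). Let $k\ge1$ be a divisor of $N+1$, $z\neq0$, and for $j=0,\dots,k-1$ let ${}_p^kF_q^j(|z|^2)_N=\sum_{n=0}^{(N+1)/k-1}|c_{nk+j}|\,|z|^{2(nk+j)}$, assumed nonzero, and define the truncated $k$-hypercat $$|z;\alpha,\beta;k,j\rangle={}_p^kF_q^j(|z|^2)_N^{-1/2}\sum_{n=0}^{(N+1)/k-1}s_{nk+j}\,z^{nk+j}\,|nk+j\rangle .$$ Then for each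 $j=0,1,\dots,k-1$, $$|z;\alpha,\beta;k,j\rangle=\frac1k\left(\frac{\mathcal N(|z|)}{{}_p^kF_q^j(|z|^2)_N}\right)^{1/2}\sum_{l=0}^{k-1}e^{-2\pi i jl/k}\,|ze^{2\pi i l/k};\alpha,\beta\rangle .$$
   Context: $(a)_n=a(a+1)\cdots(a+n-1)$, $(a)_0=1$, is the Pochhammer symbol. In the paper the coefficient $s_n$ is written as $1/\sqrt{{}_p\rho_q(n)}$ with ${}_p\rho_q(n)=n!\prod_j(\beta_j)_n/\prod_i(\alpha_i)_n$, and the normalizations use $|{}_p\rho_q(n)|$; any fixed choice of square root, used consistently on both sides, is meant. *)

theory Defs
  imports "HOL-Analysis.Analysis"
begin

text \<open>Parameters: alpha_1..alpha_p as al 0..al (p-1), beta_1..beta_q as be 0..be (q-1).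
  States in the (N+1)-dimensional Hilbert space are represented by their coordinate
  functions nat => complex w.r.t. the orthonormal basis |0>,...,|N>.\<close>

definition negints :: "nat \<Rightarrow> (nat \<Rightarrow> real) \<Rightarrow> nat \<Rightarrow> (nat \<Rightarrow> real) \<Rightarrow> real set" where
  "negints p al q be = {x. ((\<exists>i<p. x = al i) \<or> (\<exists>j<q. x = be j)) \<and> x \<in> \<int> \<and> x < 0}"

definition truncN :: "nat \<Rightarrow> (nat \<Rightarrow> real) \<Rightarrow> nat \<Rightarrow> (nat \<Rightarrow> real) \<Rightarrow> nat" where
  "truncN p al q be = Max ((\<lambda>x. nat \<lfloor>- x\<rfloor>) ` negints p al q be)"

definition hcoef :: "nat \<Rightarrow> (nat \<Rightarrow> real) \<Rightarrow> nat \<Rightarrow> (nat \<Rightarrow> real) \<Rightarrow> nat \<Rightarrow> real" where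
  "hcoef p al q be n =
     (\<Prod>i<p. pochhammer (al i) n) / ((\<Prod>j<q. pochhammer (be j) n) * fact n)"

definition ket :: "nat \<Rightarrow> nat \<Rightarrow> complex" where
  "ket a = (\<lambda>m. if m = a then 1 else 0)"

definition cnorm :: "(nat \<Rightarrow> real) \<Rightarrow> nat \<Rightarrow> real \<Rightarrow> real" where
  "cnorm c N r = (\<Sum>n\<le>N. \<bar>c n\<bar> * r ^ (2 * n))"

definition coh_state :: "(nat \<Rightarrow> real) \<Rightarrow> (nat \<Rightarrow> complex) \<Rightarrow> nat \<Rightarrow> complex \<Rightarrow> nat \<Rightarrow> complex" where
  "coh_state c s N w = (\<lambda>m. complex_of_real (1 / sqrt (cnorm c N (cmod w))) *
      (\<Sum>n\<le>N. s n * w ^ n * ket n m))"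

definition kF :: "(nat \<Rightarrow> real) \<Rightarrow> nat \<Rightarrow> nat \<Rightarrow> nat \<Rightarrow> real \<Rightarrow> real" where
  "kF c N k j x = (\<Sum>n<(N + 1) div k. \<bar>c (n * k + j)\<bar> * x ^ (n * k + j))"

definition hypercat :: "(nat \<Rightarrow> real) \<Rightarrow> (nat \<Rightarrow> complex) \<Rightarrow> nat \<Rightarrow> nat \<Rightarrow> nat \<Rightarrow> complex \<Rightarrow> nat \<Rightarrow> complex" where
  "hypercat c s N k j z = (\<lambda>m. complex_of_real (1 / sqrt (kF c N k j ((cmod z)\<^sup>2))) *
      (\<Sum>n<(N + 1) div k. s (n * k + j) * z ^ (n * k + j) * ket (n * k + j) m))"

end

theory Submission
  imports Defs
begin


lemma rou_sum:
  fixes d :: int and k :: nat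
  assumes "k > 0"
  shows "(\<Sum>l<k. exp (2 * pi * \<i> * of_int d / of_nat k) ^ l) = (if int k dvd d then of_nat k else 0)"
proof -
  define w where "w = exp (2 * pi * \<i> * of_int d / of_nat k)"
  have wk: "w ^ k = 1"
  proof -
    have "w ^ k = exp (of_nat k * (2 * pi * \<i> * of_int d / of_nat k))"
      unfolding w_def by (rule exp_of_nat_mult[symmetric])
    also have "\<dots> = exp ((2 * of_int d * pi) * \<i>)" using assms by (simp add: field_simps)
    also have "\<dots> = 1" by (rule exp_integer_2pi) simp
    finally show ?thesis .
  qed
  show ?thesis
  proof (cases "int k dvd d")
    case True
    then obtain t where t: "d = int k * t" by blast
    have "w = exp ((2 * of_int t * pi) * \<i>)" unfolding w_def t using assms by (simp add: field_simps)
    also have "\<dots> = 1" by (rule exp_integer_2pi) simp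
    finally have "w = 1" .
    hence "(\<Sum>l<k. w ^ l) = of_nat k" by simp
    thus ?thesis using True unfolding w_def by simp
  next
    case False
    have "w \<noteq> 1"
    proof
      assume "w = 1"
      then obtain n :: int where n: "Im (2 * pi * \<i> * of_int d / of_nat k) = of_int (2 * n) * pi"
        unfolding w_def exp_eq_1 by blast
      hence "2 * pi * of_int d / real k = of_int (2 * n) * pi" by simp
      hence "real_of_int d = real k * of_int n" using assms by (simp add: field_simps)
      hence "d = int k * n" by (metis of_int_eq_iff of_int_mult of_int_of_nat_eq)
      thus False using False by simp
    qed
    hence "(\<Sum>l<k. w ^ l) = 0" using wk by (simp add: geometric_sum)
    thus ?thesis using False unfolding w_def by simp
  qed
qed

lemma ket_sum_le: "(\<Sum>n\<le>N. f n * ket n m) = (if m \<le> N then f m else 0)"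
  by (simp add: ket_def if_distrib sum.delta' cong: if_cong)

lemma ket_sum_k:
  assumes "j < k" "k dvd (N + 1)"
  shows "(\<Sum>n<(N + 1) div k. f (n * k + j) * ket (n * k + j) m) = (if m \<le> N \<and> m mod k = j then f m else 0)"
proof -
  have k0: "k > 0" using assms by simp
  have eq: "(m = n * k + j) \<longleftrightarrow> (m mod k = j \<and> n = m div k)" for n
  proof
    assume h: "m = n * k + j"
    have "m mod k = j" unfolding h using assms(1) by simp
    moreover have "m div k = n" unfolding h using assms(1) k0 by simp
    ultimately show "m mod k = j \<and> n = m div k" by simp
  next
    assume "m mod k = j \<and> n = m div k"
    thus "m = n * k + j" using div_mult_mod_eq[of m k] by simp
  qed
  have "(\<Sum>n<(N + 1) div k. f (n * k + j) * ket (n * k + j) m) =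
        (\<Sum>n<(N + 1) div k. if n = m div k then (if m mod k = j then f m else 0) else 0)"
    by (rule sum.cong) (auto simp: ket_def eq)
  also have "\<dots> = (if m div k < (N + 1) div k then (if m mod k = j then f m else 0) else 0)"
    by (simp add: sum.delta')
  also have "\<dots> = (if m \<le> N \<and> m mod k = j then f m else 0)"
  proof -
    have "m div k < (N + 1) div k \<longleftrightarrow> m \<le> N"
    proof
      assume "m div k < (N + 1) div k"
      hence "m div k + 1 \<le> (N + 1) div k" by simp
      hence "(m div k + 1) * k \<le> (N + 1) div k * k" by (rule mult_le_mono1)
      also have "\<dots> = N + 1" using assms(2) by simp
      finally have a: "(m div k + 1) * k \<le> N + 1" .
      have e: "(m div k + 1) * k = m div k * k + k" by simp
      have "m mod k < k" using k0 by simp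
      hence "m < (m div k + 1) * k" unfolding e using div_mult_mod_eq[of m k] by linarith
      moreover note a
      ultimately show "m \<le> N" by simp
    next
      assume "m \<le> N"
      hence "m < N + 1" by simp
      also have "N + 1 = (N + 1) div k * k" using assms(2) by simp
      finally show "m div k < (N + 1) div k" by (rule less_mult_imp_div_less)
    qed
    thus ?thesis by auto
  qed
  finally show ?thesis .
qed

lemma cnorm_pos: "cnorm (hcoef p al q be) N r \<ge> 1"
proof -
  have "1 = \<bar>hcoef p al q be 0\<bar> * r ^ (2 * 0)" by (simp add: hcoef_def)
  also have "\<dots> \<le> cnorm (hcoef p al q be) N r" unfolding cnorm_def
    by (rule member_le_sum) auto
  finally show ?thesis .
qed

lemma norm_rot: "cmod (z * exp (2 * pi * \<i> * of_nat l / of_nat k)) = cmod z"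
  by (simp add: norm_mult norm_exp_eq_Re)

lemma rot_combine:
  assumes "k > 0"
  shows "exp (- 2 * pi * \<i> * of_nat j * of_nat l / of_nat k) * exp (2 * pi * \<i> * of_nat l / of_nat k) ^ m
   = exp (2 * pi * \<i> * of_int (int m - int j) / of_nat k) ^ l"
proof -
  have "exp (- 2 * pi * \<i> * of_nat j * of_nat l / of_nat k) * exp (2 * pi * \<i> * of_nat l / of_nat k) ^ m
     = exp (- 2 * pi * \<i> * of_nat j * of_nat l / of_nat k + of_nat m * (2 * pi * \<i> * of_nat l / of_nat k))"
    by (simp only: exp_add exp_of_nat_mult)
  also have "\<dots> = exp (of_nat l * (2 * pi * \<i> * of_int (int m - int j) / of_nat k))"
    by (rule arg_cong[where f=exp]) (use assms in \<open>simp add: field_simps\<close>)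
  also have "\<dots> = exp (2 * pi * \<i> * of_int (int m - int j) / of_nat k) ^ l"
    by (rule exp_of_nat_mult)
  finally show ?thesis .
qed

theorem proposition4:
  fixes p q :: nat and al be :: "nat \<Rightarrow> real" and s :: "nat \<Rightarrow> complex"
    and N k :: nat and z :: complex
  assumes be_nz: "\<forall>j<q. be j \<noteq> 0"
    and be_negint: "\<exists>j<q. be j \<in> \<int> \<and> be j < 0"
    and N_def: "N = truncN p al q be"
    and wd: "\<forall>n\<le>N. (\<Prod>j<q. pochhammer (be j) n) \<noteq> 0"
    and s_sq: "\<forall>n\<le>N. (s n)\<^sup>2 = complex_of_real (hcoef p al q be n)"
    and k_pos: "k \<ge> 1" and k_dvd: "k dvd (N + 1)"
    and z_nz: "z \<noteq> 0"
    and kF_nz: "\<forall>j<k. kF (hcoef p al q be) N k j ((cmod z)\<^sup>2) \<noteq> 0"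
  shows "\<forall>j<k. hypercat (hcoef p al q be) s N k j z =
     (\<lambda>m. complex_of_real (1 / real k *
            sqrt (cnorm (hcoef p al q be) N (cmod z) / kF (hcoef p al q be) N k j ((cmod z)\<^sup>2))) *
          (\<Sum>l<k. exp (- 2 * pi * \<i> * of_nat j * of_nat l / of_nat k) *
             coh_state (hcoef p al q be) s N (z * exp (2 * pi * \<i> * of_nat l / of_nat k)) m))"
proof (intro allI impI ext)
  fix j m assume j: "j < k"
  define c where "c = hcoef p al q be"
  define C where "C = cnorm c N (cmod z)"
  define K where "K = kF c N k j ((cmod z)\<^sup>2)"
  have k0: "k > 0" using k_pos by simp
  have C1: "C \<ge> 1" unfolding C_def c_def by (rule cnorm_pos)
  have sC: "sqrt C > 0" using C1 by simp
  have L: "hypercat c s N k j z m = complex_of_real (1 / sqrt K) * (if m \<le> N \<and> m mod k = j then s m * z ^ m else 0)"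
    unfolding hypercat_def K_def using ket_sum_k[OF j k_dvd, where f="\<lambda>n. s n * z ^ n" and m=m] by simp
  have coh: "coh_state c s N (z * exp (2 * pi * \<i> * of_nat l / of_nat k)) m =
     complex_of_real (1 / sqrt C) * (if m \<le> N then s m * z ^ m * exp (2 * pi * \<i> * of_nat l / of_nat k) ^ m else 0)" for l
    unfolding coh_state_def C_def norm_rot
    by (simp only: ket_sum_le) (simp add: power_mult_distrib)
  have dv: "int k dvd (int m - int j) \<longleftrightarrow> m mod k = j"
  proof -
    have "int k dvd (int m - int j) \<longleftrightarrow> int m mod int k = int j mod int k"
      by (simp add: mod_eq_dvd_iff)
    also have "\<dots> \<longleftrightarrow> m mod k = j" using j by (simp add: zmod_int[symmetric] del: of_nat_mod)
    finally show ?thesis .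
  qed
  have R: "(\<Sum>l<k. exp (- 2 * pi * \<i> * of_nat j * of_nat l / of_nat k) *
             coh_state c s N (z * exp (2 * pi * \<i> * of_nat l / of_nat k)) m)
        = complex_of_real (1 / sqrt C) * (if m \<le> N \<and> m mod k = j then s m * z ^ m * of_nat k else 0)"
  proof (cases "m \<le> N")
    case False
    have "coh_state c s N (z * exp (2 * pi * \<i> * of_nat l / of_nat k)) m = 0" for l
      using False by (simp only: coh) simp
    thus ?thesis using False by simp
  next
    case True
    have "(\<Sum>l<k. exp (- 2 * pi * \<i> * of_nat j * of_nat l / of_nat k) *
             coh_state c s N (z * exp (2 * pi * \<i> * of_nat l / of_nat k)) m)
       = (\<Sum>l<k. complex_of_real (1 / sqrt C) * (s m * z ^ m) * exp (2 * pi * \<i> * of_int (int m - int j) / of_nat k) ^ l)"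
    proof (rule sum.cong[OF refl])
      fix l
      have "exp (- 2 * pi * \<i> * of_nat j * of_nat l / of_nat k) *
             coh_state c s N (z * exp (2 * pi * \<i> * of_nat l / of_nat k)) m
         = complex_of_real (1 / sqrt C) * (s m * z ^ m) * (exp (- 2 * pi * \<i> * of_nat j * of_nat l / of_nat k) * exp (2 * pi * \<i> * of_nat l / of_nat k) ^ m)"
        unfolding coh using True by (simp add: mult_ac)
      also have "\<dots> = complex_of_real (1 / sqrt C) * (s m * z ^ m) * exp (2 * pi * \<i> * of_int (int m - int j) / of_nat k) ^ l"
        by (simp only: rot_combine[OF k0])
      finally show "exp (- 2 * pi * \<i> * of_nat j * of_nat l / of_nat k) *
             coh_state c s N (z * exp (2 * pi * \<i> * of_nat l / of_nat k)) m
         = complex_of_real (1 / sqrt C) * (s m * z ^ m) * exp (2 * pi * \<i> * of_int (int m - int j) / of_nat k) ^ l" .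
    qed
    also have "\<dots> = complex_of_real (1 / sqrt C) * (s m * z ^ m) * (\<Sum>l<k. exp (2 * pi * \<i> * of_int (int m - int j) / of_nat k) ^ l)"
      by (simp add: sum_distrib_left)
    also have "\<dots> = complex_of_real (1 / sqrt C) * (if m \<le> N \<and> m mod k = j then s m * z ^ m * of_nat k else 0)"
      using rou_sum[OF k0, of "int m - int j"] dv True by simp
    finally show ?thesis .
  qed
  have "complex_of_real (1 / real k * sqrt (C / K)) * complex_of_real (1 / sqrt C) * of_nat k = complex_of_real (1 / sqrt K)"
  proof -
    have "1 / real k * sqrt (C / K) * (1 / sqrt C) * real k = 1 / sqrt K"
      using sC k0 by (simp add: real_sqrt_divide field_simps)
    hence "complex_of_real (1 / real k * sqrt (C / K) * (1 / sqrt C) * real k) = complex_of_real (1 / sqrt K)"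
      by (rule arg_cong)
    thus ?thesis by (simp only: of_real_mult of_real_of_nat_eq)
  qed
  note F = this
  define X where "X = (if m \<le> N \<and> m mod k = j then s m * z ^ m * of_nat k else 0)"
  have H: "X / of_nat k = (if m \<le> N \<and> m mod k = j then s m * z ^ m else 0)"
    unfolding X_def using k0 by simp
  have "complex_of_real (1 / real k * sqrt (C / K)) *
          (\<Sum>l<k. exp (- 2 * pi * \<i> * of_nat j * of_nat l / of_nat k) *
             coh_state c s N (z * exp (2 * pi * \<i> * of_nat l / of_nat k)) m)
      = complex_of_real (1 / real k * sqrt (C / K)) * (complex_of_real (1 / sqrt C) * X)"
    unfolding R X_def ..
  also have "\<dots> = (complex_of_real (1 / real k * sqrt (C / K)) * complex_of_real (1 / sqrt C) * of_nat k) * (X / of_nat k)"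
    using k0 by (simp add: mult.assoc)
  also have "\<dots> = complex_of_real (1 / sqrt K) * (X / of_nat k)"
    by (simp only: F)
  also have "\<dots> = hypercat c s N k j z m"
    by (simp only: L H)
  finally show "hypercat c s N k j z m = complex_of_real (1 / real k * sqrt (C / K)) *
          (\<Sum>l<k. exp (- 2 * pi * \<i> * of_nat j * of_nat l / of_nat k) *
             coh_state c s N (z * exp (2 * pi * \<i> * of_nat l / of_nat k)) m)" by (rule sym)
qed

end
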